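(* Let $\langle (x_n,y_n)\rangle_{n\in\mathbb{N}}$ be the solutions in $\mathbb{N}^2$ of $x^2-19\,y^2=1$, indexed so that $y_0<y_1<\cdots$. Suppose $n>0$ is not a power of $2$ and $y_n/39$ is representable. Then the system \[\begin{cases} X^2-19\cdot 39^2\, Y^2 = 1,\\ X+13^2\, Y = r^2+r\,s+5\,s^2,\\ X+19\cdot 3^2\, Y = v^2+v\,u+5\,u^2,\\ Y>0\end{cases}\] has a solution $\bar X,\bar Y,\bar r,\bar s,\bar v,\bar u\in\mathbb{Z}$ such that $\bar r\neq\pm1$ or $\bar s\neq 0$, and moreover $39\,(\bar X+13^2\bar Y)\,(\bar X+19\cdot 3^2\,\bar Y)\mid y_n$.
   Context: $(x_0,y_0)=(1,0)$, $(x_1,y_1)=(170,39)$, $x_n+y_n\sqrt{19}=(170+39\sqrt{19})^n$; note $39\mid y_k$ for all $k$. A non-negative integer $N$ is called representable if $N=w^2+w\,t+5\,t^2$ for some $w,t\in\mathbb{Z}$. *)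

theory Defs
  imports Main
begin

text \<open>Solutions of x^2 - 19 y^2 = 1 in N^2, ordered by increasing y:
  x_n + y_n sqrt 19 = (170 + 39 sqrt 19)^n.\<close>
fun pell19 :: "nat \<Rightarrow> int \<times> int" where
  "pell19 0 = (1, 0)"
| "pell19 (Suc n) = (let (x, y) = pell19 n in (170 * x + 19 * 39 * y, 39 * x + 170 * y))"

definition xs19 :: "nat \<Rightarrow> int" where "xs19 n = fst (pell19 n)"
definition ys19 :: "nat \<Rightarrow> int" where "ys19 n = snd (pell19 n)"

definition representable :: "int \<Rightarrow> bool" where
  "representable N \<longleftrightarrow> N \<ge> 0 \<and> (\<exists>w t :: int. N = w^2 + w * t + 5 * t^2)"

end

theory Submission imports Defs "HOL-Computational_Algebra.Primes" begin

definition F :: "int \<Rightarrow> int \<Rightarrow> int" where "F w t = w^2 + w*t + 5*t^2"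

lemma F_nonneg: "F w t \<ge> 0"
proof -
  have "4 * F w t = (2*w+t)^2 + 19*t^2" by (simp add: F_def power2_eq_square algebra_simps)
  moreover have "(2*w+t)^2 + 19*t^2 \<ge> 0" by simp
  ultimately show ?thesis by linarith
qed

lemma rep_iff: "representable N \<longleftrightarrow> (\<exists>w t. N = F w t)"
  unfolding representable_def F_def using F_nonneg[unfolded F_def] by blast

lemma F_scale: "F (p*w) (p*t) = p^2 * F w t"
  by (simp add: F_def power2_eq_square algebra_simps)

lemma shift_b:
  fixes a b :: int assumes "a > 0"
  shows "\<exists>h. \<bar>b + 2*a*h\<bar> \<le> a"
proof -
  define h0 where "h0 = - (b div (2*a))"
  have e: "b + 2*a*h0 = b mod (2*a)"
    unfolding h0_def using div_mult_mod_eq[of b "2*a"] by (simp add: algebra_simps)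
  have r: "0 \<le> b mod (2*a)" "b mod (2*a) < 2*a" using assms by auto
  show ?thesis
  proof (cases "b mod (2*a) \<le> a")
    case True then show ?thesis using e r by (intro exI[of _ h0]) auto
  next
    case False
    have "b + 2*a*(h0-1) = b mod (2*a) - 2*a" using e by (simp add: algebra_simps)
    then show ?thesis using False r by (intro exI[of _ "h0-1"]) auto
  qed
qed

lemma form_values:
  fixes a b c :: int
  assumes "a > 0" "b^2 - 4*a*c = -19"
  shows "representable (a*w^2 + b*w*t + c*t^2)"
  using assms
proof (induction "nat a" arbitrary: a b c w t rule: less_induct)
  case less
  obtain h where h: "\<bar>b + 2*a*h\<bar> \<le> a" using shift_b[OF less.prems(1)] by blast
  define b' where "b' = b + 2*a*h"
  define c' where "c' = c + b*h + a*h^2"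
  have val: "a*w^2 + b*w*t + c*t^2 = a*(w-h*t)^2 + b'*(w-h*t)*t + c'*t^2"
    unfolding b'_def c'_def by (simp add: power2_eq_square algebra_simps)
  have disc: "b'^2 - 4*a*c' = -19"
    using less.prems(2) unfolding b'_def c'_def by (simp add: power2_eq_square algebra_simps)
  have hb: "\<bar>b'\<bar> \<le> a" using h b'_def by simp
  have cpos: "c' > 0"
  proof -
    have "4*a*c' = b'^2 + 19" using disc by simp
    moreover have "b'^2 \<ge> 0" by simp
    ultimately have "a*c' > 0" by linarith
    thus ?thesis using less.prems(1) by (simp add: zero_less_mult_iff)
  qed
  show ?case
  proof (cases "c' < a")
    case True
    have eq2: "a*w^2 + b*w*t + c*t^2 = c'*t^2 + (-b')*t*(-(w-h*t)) + a*(-(w-h*t))^2"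
      unfolding val by (simp add: power2_eq_square algebra_simps)
    have "representable (c'*t^2 + (-b')*t*(-(w-h*t)) + a*(-(w-h*t))^2)"
    proof -
      have "nat c' < nat a" using True cpos by simp
      moreover have "(-b')^2 - 4*c'*a = -19" using disc by (simp add: algebra_simps)
      ultimately show ?thesis using less.hyps[of c' "-b'" a t "-(w-h*t)"] cpos by blast
    qed
    then show ?thesis unfolding eq2 .
  next
    case False
    have b2: "b'^2 \<le> a^2" using hb by (metis abs_le_square_iff abs_of_pos less.prems(1))
    have "4*a*a \<le> 4*a*c'" using False less.prems(1) by simp
    hence "3*a^2 \<le> 19" using disc b2 by (simp add: power2_eq_square)
    hence "a \<le> 2"
    proof -
      assume h3: "3*a^2 \<le> 19"
      show "a \<le> 2"
      proof (rule ccontr)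
        assume "\<not> a \<le> 2" hence "3 \<le> a" by simp
        hence "9 \<le> a*a" using mult_mono[of 3 a 3 a] by simp
        thus False using h3 by (simp add: power2_eq_square)
      qed
    qed
    have "a = 1"
    proof (rule ccontr)
      assume "a \<noteq> 1" hence a2: "a = 2" using \<open>a \<le> 2\<close> less.prems(1) by simp
      have "b' \<in> {-2,-1,0,1,2}" using hb a2 by auto
      thus False using disc a2 by (auto simp: power2_eq_square; presburger)
    qed
    have "b' = 1 \<or> b' = -1" using hb disc \<open>a = 1\<close>
    proof -
      have "b' \<in> {-1,0,1}" using hb \<open>a=1\<close> by auto
      thus ?thesis using disc \<open>a=1\<close> by (auto simp: power2_eq_square; presburger)
    qed
    hence c5: "c' = 5" using disc \<open>a=1\<close> by (auto simp: power2_eq_square)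
    show ?thesis
    proof (cases "b' = 1")
      case True
      show ?thesis unfolding val rep_iff using True c5 \<open>a=1\<close>
        by (intro exI[of _ "w-h*t"] exI[of _ t]) (simp add: F_def)
    next
      case False
      hence "b' = -1" using \<open>b' = 1 \<or> b' = -1\<close> by simp
      have "a*(w-h*t)^2 + b'*(w-h*t)*t + c'*t^2 = F (w-h*t) (-t)"
        unfolding F_def \<open>b' = -1\<close> c5 \<open>a=1\<close> by (simp add: power2_eq_square algebra_simps)
      thus ?thesis unfolding val rep_iff by blast
    qed
  qed
qed

lemma prim_divisor_rep:
  fixes A w t :: int
  assumes "A > 0" "gcd w t = 1" "A dvd F w t"
  shows "representable A"
proof -
  obtain a b where ab: "a*w + b*t = 1" using bezout_int[of w t] assms(2) by auto
  define u where "u = -b"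
  define v where "v = a"
  have det: "w*v - t*u = 1" using ab unfolding u_def v_def by (simp add: algebra_simps)
  define b' where "b' = 2*w*u + w*v + t*u + 10*t*v"
  have id: "b'^2 - 4 * F w t * F u v = -19 * (w*v - t*u)^2"
    unfolding b'_def F_def by (simp add: power2_eq_square algebra_simps)
  obtain q where q: "F w t = A * q" using assms(3) by blast
  have "b'^2 - 4*A*(q * F u v) = -19" using id det q by (simp add: algebra_simps)
  from form_values[OF assms(1) this, of 1 0] show ?thesis by simp
qed

lemma coprime_factor_rep:
  fixes A C w t :: int
  assumes "A > 0" "F w t = A * C" "coprime A C"
  shows "representable A"
  using assms
proof (induction "nat (\<bar>w\<bar> + \<bar>t\<bar>)" arbitrary: w t A C rule: less_induct)
  case less
  show ?case
  proof (cases "w = 0 \<and> t = 0")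
    case True
    hence "A * C = 0" using less.prems(2) by (simp add: F_def)
    hence "C = 0" using less.prems(1) by simp
    hence "A = 1" using less.prems(1,3) by simp
    thus ?thesis unfolding rep_iff by (intro exI[of _ 1] exI[of _ 0]) (simp add: F_def)
  next
    case nz: False
    show ?thesis
    proof (cases "gcd w t = 1")
      case True
      thus ?thesis using prim_divisor_rep[OF less.prems(1) True] less.prems(2) by simp
    next
      case False
      have "gcd w t \<noteq> 0" using nz by simp
      moreover have "\<not> is_unit (gcd w t)" using False by simp
      ultimately obtain p where p: "prime p" "p dvd gcd w t" using prime_divisor_exists by blast
      have pg: "p > 1" using p(1) prime_gt_1_int by blast
      obtain w' where w': "w = p * w'" using p(2) by (meson dvd_gcdD1 dvdE)
      obtain t' where t': "t = p * t'" using p(2) by (meson dvd_gcdD2 dvdE)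
      have Fs: "F w t = p^2 * F w' t'" unfolding w' t' F_scale ..
      have lt: "nat (\<bar>w'\<bar> + \<bar>t'\<bar>) < nat (\<bar>w\<bar> + \<bar>t\<bar>)"
      proof -
        have "\<bar>w\<bar> = p * \<bar>w'\<bar>" "\<bar>t\<bar> = p * \<bar>t'\<bar>" using w' t' pg by (auto simp: abs_mult)
        hence "\<bar>w\<bar> + \<bar>t\<bar> = p * (\<bar>w'\<bar> + \<bar>t'\<bar>)" by (simp add: algebra_simps)
        moreover have "\<bar>w'\<bar> + \<bar>t'\<bar> > 0" using nz w' t' by auto
        ultimately show ?thesis using pg by (simp add: nat_less_eq_zless) 
      qed
      have p2: "p^2 dvd A * C" using Fs less.prems(2) by (metis dvd_triv_left)
      show ?thesis
      proof (cases "p dvd A")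
        case True
        have "\<not> p dvd C" using True less.prems(3) p(1)
          by (meson coprime_common_divisor not_prime_unit)
        hence "coprime (p^2) C" using prime_imp_coprime[OF p(1)] by (simp add: coprime_commute)
        hence "p^2 dvd A" using p2 coprime_dvd_mult_left_iff by blast
        then obtain A' where A': "A = p^2 * A'" by blast
        have A'pos: "A' > 0" using less.prems(1) A' pg
          by (metis zero_less_mult_pos zero_less_power dual_order.strict_trans zero_less_one)
        have "F w' t' = A' * C" using Fs less.prems(2) A' pg by (simp add: algebra_simps)
        moreover have "coprime A' C" using less.prems(3) A' by simp
        ultimately have "representable A'" using less.hyps[OF lt A'pos] by blast
        then obtain a b where "A' = F a b" unfolding rep_iff by blast
        hence "A = F (p*a) (p*b)" using A' F_scale by simp
        thus ?thesis unfolding rep_iff by blast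
      next
        case False
        hence "coprime (p^2) A" using prime_imp_coprime[OF p(1)] by (simp add: coprime_commute)
        hence "p^2 dvd C" using p2 coprime_dvd_mult_right_iff by blast
        then obtain C' where C': "C = p^2 * C'" by blast
        have "F w' t' = A * C'" using Fs less.prems(2) C' pg by (simp add: algebra_simps)
        moreover have "coprime A C'" using less.prems(3) C' by simp
        ultimately show ?thesis using less.hyps[OF lt less.prems(1)] by blast
      qed
    qed
  qed
qed

lemma rep_coprime_factor:
  fixes A C :: int
  assumes "representable (A * C)" "A > 0" "coprime A C"
  shows "representable A"
  using assms coprime_factor_rep unfolding rep_iff by metis

lemma pell_0: "xs19 0 = 1" "ys19 0 = 0" by (simp_all add: xs19_def ys19_def)

lemma pell_Suc: "xs19 (Suc n) = 170 * xs19 n + 741 * ys19 n"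
  "ys19 (Suc n) = 39 * xs19 n + 170 * ys19 n"
  by (simp_all add: xs19_def ys19_def split: prod.splits)

lemma pell_add: "xs19 (m+n) = xs19 m * xs19 n + 19 * ys19 m * ys19 n \<and>
                 ys19 (m+n) = xs19 m * ys19 n + ys19 m * xs19 n"
  by (induction n) (simp_all add: pell_0 pell_Suc algebra_simps)

lemma pell_norm: "xs19 n ^ 2 - 19 * ys19 n ^ 2 = 1"
  by (induction n) (simp_all add: pell_0 pell_Suc power2_eq_square algebra_simps)

lemma pell_pos: "xs19 n \<ge> 1 \<and> ys19 n \<ge> 0"
  by (induction n) (simp_all add: pell_0 pell_Suc)

lemma ys_39: "39 dvd ys19 n"
  by (induction n) (simp_all add: pell_0 pell_Suc)

lemma ys_Suc_ge: "ys19 (Suc n) \<ge> 39"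
  using pell_pos[of n] by (simp add: pell_Suc)

lemma odd_part: "(n::nat) > 0 \<Longrightarrow> \<exists>a m. n = 2^a * m \<and> odd m"
proof (induction n rule: less_induct)
  case (less n)
  show ?case
  proof (cases "even n")
    case True
    then obtain k where k: "n = 2*k" by blast
    hence "k < n" "k > 0" using less.prems by auto
    then obtain a m where "k = 2^a*m" "odd m" using less.IH by blast
    thus ?thesis using k by (intro exI[of _ "Suc a"] exI[of _ m]) auto
  next
    case False thus ?thesis by (intro exI[of _ 0] exI[of _ n]) auto
  qed
qed

lemma pell_coprime: "coprime (xs19 n) (ys19 n)"
proof (rule coprimeI)
  fix c assume "c dvd xs19 n" "c dvd ys19 n"
  hence "c dvd xs19 n ^ 2 - 19 * ys19 n ^ 2" by (simp add: power2_eq_square)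
  thus "is_unit c" using pell_norm[of n] by simp
qed

lemma ys_dbl: "ys19 (l + l) = 2 * xs19 l * ys19 l"
  using pell_add[of l l] by simp

lemma ys_split:
  assumes "odd D" "D dvd ys19 j"
  shows "\<exists>C. ys19 (2^a*j) = ys19 j * C \<and> coprime D C"
proof (induction a)
  case 0 thus ?case by (intro exI[of _ 1]) simp
next
  case (Suc a)
  then obtain C where C: "ys19 (2^a*j) = ys19 j * C" "coprime D C" by blast
  define l where "l = 2^a*j"
  have l2: "2^(Suc a)*j = l + l" unfolding l_def by simp
  have "D dvd ys19 l" using C(1) assms(2) unfolding l_def by simp
  hence c1: "coprime D (xs19 l)"
    using coprime_divisors[of D "ys19 l" "xs19 l" "xs19 l"] pell_coprime[of l] by (simp add: coprime_commute)
  have c2: "coprime D 2" using assms(1) by (simp add: coprime_commute)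
  have "ys19 (2^(Suc a)*j) = ys19 j * (2 * xs19 l * C)"
    unfolding l2 ys_dbl using C(1) unfolding l_def by (simp add: algebra_simps)
  moreover have "coprime D (2 * xs19 l * C)" using c1 c2 C(2) by simp
  ultimately show ?case by blast
qed

lemma dvd_ys: "ys19 j dvd ys19 (2^a * j)"
  using ys_split[of 1 j a] by auto

theorem theorem4:
  fixes n :: nat
  assumes "n > 0"
    and "\<not> (\<exists>k::nat. n = 2 ^ k)"
    and "representable (ys19 n div 39)"
  shows "\<exists>X Y r s v u :: int.
           X^2 - 19 * 39^2 * Y^2 = 1 \<and>
           X + 13^2 * Y = r^2 + r * s + 5 * s^2 \<and>
           X + 19 * 3^2 * Y = v^2 + v * u + 5 * u^2 \<and>
           Y > 0 \<and>
           ((r \<noteq> 1 \<and> r \<noteq> -1) \<or> s \<noteq> 0) \<and>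
           (39 * (X + 13^2 * Y) * (X + 19 * 3^2 * Y)) dvd ys19 n"
proof -
  obtain a m where nm: "n = 2^a*m" "odd m" using odd_part assms(1) by blast
  have "m \<noteq> 1" using assms(2) nm by auto
  obtain k where mk: "m = 2*k+1" using nm(2) oddE by blast
  have "k \<noteq> 0" using mk \<open>m \<noteq> 1\<close> by simp
  then obtain k' where kk: "k = Suc k'" using not0_implies_Suc by blast
  define X where "X = xs19 k"
  obtain Y where Y: "ys19 k = 39*Y" using ys_39[of k] by blast
  have Ypos: "Y > 0" using ys_Suc_ge[of k'] Y kk by simp
  have Xpos: "X \<ge> 1" using pell_pos[of k] X_def by simp
  define A where "A = X + 169*Y"
  define B where "B = X + 171*Y"
  have norm: "X^2 - 28899*Y^2 = 1" using pell_norm[of k] Y X_def by (simp add: power2_eq_square)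
  have ym: "ys19 m = 39*A*B"
  proof -
    have "m = Suc (k+k)" using mk by simp
    hence "ys19 m = 39 * xs19 (k+k) + 170 * ys19 (k+k)" by (simp add: pell_Suc)
    also have "\<dots> = 39 * (X*X + 19*(39*Y)*(39*Y)) + 170 * (2*X*(39*Y))"
      using pell_add[of k k] Y X_def by simp
    also have "\<dots> = 39*A*B" unfolding A_def B_def by (simp add: algebra_simps)
    finally show ?thesis .
  qed
  have key: "169*B^2 - 171*A^2 = -2"
    using norm unfolding A_def B_def by (simp add: power2_eq_square algebra_simps)
  have oddA: "odd A"
  proof
    assume "even A"
    then obtain a' where a': "A = 2*a'" by blast
    have "169*B^2 = 2*(342*a'^2 - 1)" using key a' by (simp add: power2_eq_square algebra_simps)
    hence "even (169*B^2)" by simp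
    hence "even B" by simp
    then obtain b' where b': "B = 2*b'" by blast
    have "2*(2*(169*b'^2 - 171*a'^2)) = 2*(-1::int)" using key a' b' by algebra
    hence "2*(169*b'^2 - 171*a'^2) = -1" by simp
    hence "even (-1::int)" by (metis dvd_triv_left)
    thus False by simp
  qed
  have oddB: "odd B"
  proof
    assume "even B"
    then obtain b' where b': "B = 2*b'" by blast
    have "171*A^2 = 2*(338*b'^2 + 1)" using key b' by (simp add: power2_eq_square algebra_simps)
    hence "even (171*A^2)" by simp
    thus False using oddA by simp
  qed
  have copAB: "coprime A B"
  proof (rule coprimeI)
    fix c assume c: "c dvd A" "c dvd B"
    hence "c dvd 169*B^2 - 171*A^2" by (simp add: power2_eq_square)
    hence "c dvd 2" using key by simp
    hence "\<bar>c\<bar> \<le> 2" "c \<noteq> 0" using dvd_imp_le_int[of 2 c] by auto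
    moreover have "odd c" using c(1) oddA by (meson dvd_trans)
    ultimately have "\<bar>c\<bar> = 1" by (cases "c \<ge> 0") (auto, presburger+)
    thus "is_unit c" by simp
  qed
  have oddAB: "odd (A*B)" using oddA oddB by simp
  have "A*B dvd ys19 m" using ym by simp
  from ys_split[OF oddAB this, of a] obtain C where C: "ys19 n = ys19 m * C" "coprime (A*B) C"
    using nm(1) by (auto simp: mult.commute)
  have N: "ys19 n div 39 = A*B*C" using C(1) ym by simp
  have Apos: "A > 0" "B > 0" using Xpos Ypos A_def B_def by auto
  have "representable (A*(B*C))" using assms(3) N by (simp add: mult.assoc)
  moreover have "coprime A (B*C)" using copAB C(2) by simp
  ultimately have repA: "representable A" using rep_coprime_factor Apos by blast
  have "representable (B*(A*C))" using assms(3) N by (simp add: algebra_simps)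
  moreover have "coprime B (A*C)" using copAB C(2) by (simp add: coprime_commute)
  ultimately have repB: "representable B" using rep_coprime_factor Apos by blast
  obtain r s where rs: "A = F r s" using repA rep_iff by blast
  obtain v u where vu: "B = F v u" using repB rep_iff by blast
  have nt: "(r \<noteq> 1 \<and> r \<noteq> -1) \<or> s \<noteq> 0"
  proof (rule ccontr)
    assume "\<not> ?thesis"
    hence "A = 1" using rs by (auto simp: F_def)
    thus False using Xpos Ypos A_def by simp
  qed
  show ?thesis
    apply (rule exI[of _ X], rule exI[of _ Y], rule exI[of _ r], rule exI[of _ s],
           rule exI[of _ v], rule exI[of _ u])
    using norm rs vu Ypos nt ym C(1) unfolding A_def B_def F_def by simp
qed

end
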